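(* Let $\Sigma_A$, $\pi$, $\Pi$ be as in the context and let $\lambda$ be a symmetric Markov measure on $\Sigma_A$. If $B\subset\Sigma_A\times I$ is a bony graph relative to $\lambda$, then $\Pi(B)$ is a bi-bony graph relative to $\pi_*\lambda$. Moreover, if $B$ is continuous, then so is $\Pi(B)$.
   Context: $I=[0,1]$, $R(x)=1-x$. Given $C^1$-diffeomorphisms onto their images $f_1,\ldots,f_N$ of $I$, let $\mathcal I_P$ / $\mathcal I_R$ be the indices of orientation preserving / reversing $f_i$. $A=(a_{ij})_{i,j=1}^{2N}$ with $a_{ij}=1$ if ($i\in\mathcal I_P$, $j\le N$), or ($i\in\mathcal I_R$, $j>N$), or ($i-N\in\mathcal I_P$, $j>N$), or ($i-N\in\mathcal I_R$, $j\le N$), else $0$; $\Sigma_A$ the $A$-admissible sequences in $\{1,\ldots,2N\}^{\mathbb Z}$; $\pi\colon\Sigma_A\to\Sigma_N=\{1,\ldots,N\}^{\mathbb Z}$, $\pi(\omega)_n=\overline{\omega_n}$ ($\overline i=i$ for $i\le N$, $\overline i=i-N$ otherwise). $C=\{\omega\colon\omega_0\le N\}$; $\Pi(\omega,x)=(\pi(\omega),x)$ if $\omega\in C$, $(\pi(\omega),R(x))$ otherwise. A Markov measure on $\Sigma_A$ with probability vector $(p_i)$ and stochastic matrix $(P_{ij})$ is symmetric if $p_i=p_{i+N}$, $P_{ij}=P_{(i+N)(j+N)}$, $P_{i(j+N)}=P_{(i+N)j}$ for $i,j\le N$. For $\Sigma\in\{\Sigma_A,\Sigma_N\}$, $B\subset\Sigma\times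 I$ and $\xi\in\Sigma$, $B_\xi$ is the set of $x$ with $(\xi,x)\in B$. Relative to a Borel probability $\lambda$ on $\Sigma$, $B$ is a bony graph if $B_\xi$ is a single point for $\lambda$-a.e. $\xi$ and an interval at all remaining points; it is continuous if for every $\xi$ in the projection $\Pi_1(B)$ and $\varepsilon>0$ there is $\delta>0$ such that $\eta\in\Pi_1(B)$, $d(\eta,\xi)<\delta$ imply $B_\eta\subset U_\varepsilon(B_\xi)$. A (continuous) bi-bony graph is a union of two (continuous) bony graphs. *)

theory Defs
  imports "HOL-Analysis.Analysis" "HOL-Probability.Probability"
begin

definition unitI :: "real set" where "unitI = {0..1}"
definition refl :: "real \<Rightarrow> real" where "refl x = 1 - x"

definition C1_diffeo_onto_image :: "(real \<Rightarrow> real) \<Rightarrow> bool" where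
  "C1_diffeo_onto_image f \<longleftrightarrow>
     (\<exists>g f' g'. (\<forall>x\<in>unitI. g (f x) = x) \<and> (\<forall>y\<in>f ` unitI. f (g y) = y)
        \<and> continuous_on unitI f' \<and> (\<forall>x\<in>unitI. (f has_real_derivative f' x) (at x within unitI))
        \<and> continuous_on (f ` unitI) g'
        \<and> (\<forall>y\<in>f ` unitI. (g has_real_derivative g' y) (at y within f ` unitI)))"

definition IP :: "nat \<Rightarrow> (nat \<Rightarrow> real \<Rightarrow> real) \<Rightarrow> nat set" where
  "IP N f = {i\<in>{1..N}. \<forall>x\<in>unitI. \<forall>y\<in>unitI. x < y \<longrightarrow> f i x < f i y}"
definition IR :: "nat \<Rightarrow> (nat \<Rightarrow> real \<Rightarrow> real) \<Rightarrow> nat set" where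
  "IR N f = {i\<in>{1..N}. \<forall>x\<in>unitI. \<forall>y\<in>unitI. x < y \<longrightarrow> f i y < f i x}"

text \<open>The transition matrix A (entries 1 = True, 0 = False), indices 1..2N.\<close>
definition Amat :: "nat \<Rightarrow> (nat \<Rightarrow> real \<Rightarrow> real) \<Rightarrow> nat \<Rightarrow> nat \<Rightarrow> bool" where
  "Amat N f i j \<longleftrightarrow>
     (i \<in> IP N f \<and> j \<le> N) \<or> (i \<in> IR N f \<and> j > N) \<or>
     (i > N \<and> i - N \<in> IP N f \<and> j > N) \<or> (i > N \<and> i - N \<in> IR N f \<and> j \<le> N)"

definition SigmaA :: "nat \<Rightarrow> (nat \<Rightarrow> real \<Rightarrow> real) \<Rightarrow> (int \<Rightarrow> nat) set" where
  "SigmaA N f = {\<omega>. (\<forall>n. \<omega> n \<in> {1..2*N}) \<and> (\<forall>n. Amat N f (\<omega> n) (\<omega> (n + 1)))}"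

definition SigmaN :: "nat \<Rightarrow> (int \<Rightarrow> nat) set" where
  "SigmaN N = {\<xi>. \<forall>n. \<xi> n \<in> {1..N}}"

definition bar :: "nat \<Rightarrow> nat \<Rightarrow> nat" where
  "bar N i = (if i \<le> N then i else i - N)"

definition proj :: "nat \<Rightarrow> (int \<Rightarrow> nat) \<Rightarrow> (int \<Rightarrow> nat)" where
  "proj N \<omega> = (\<lambda>n. bar N (\<omega> n))"

definition cylC :: "nat \<Rightarrow> (int \<Rightarrow> nat) set" where
  "cylC N = {\<omega>. \<omega> 0 \<le> N}"

definition PiMap :: "nat \<Rightarrow> (int \<Rightarrow> nat) \<times> real \<Rightarrow> (int \<Rightarrow> nat) \<times> real" where
  "PiMap N = (\<lambda>(\<omega>, x). if \<omega> \<in> cylC N then (proj N \<omega>, x) else (proj N \<omega>, refl x))"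

definition seq_dist :: "(int \<Rightarrow> nat) \<Rightarrow> (int \<Rightarrow> nat) \<Rightarrow> real" where
  "seq_dist \<omega> \<eta> = (if \<omega> = \<eta> then 0
     else (1/2) ^ (LEAST k::nat. \<exists>n::int. \<bar>n\<bar> = int k \<and> \<omega> n \<noteq> \<eta> n))"

text \<open>Markov measure on Sigma_A with probability vector p and stochastic matrix P,
  as a Borel probability measure on the sequence space (supported on Sigma_A),
  determined by its values on cylinder sets.\<close>
definition markov_measure ::
  "nat \<Rightarrow> (nat \<Rightarrow> nat \<Rightarrow> bool) \<Rightarrow> (nat \<Rightarrow> real) \<Rightarrow> (nat \<Rightarrow> nat \<Rightarrow> real) \<Rightarrow> (int \<Rightarrow> nat) measure \<Rightarrow> bool" where
  "markov_measure M Adm p P lam \<longleftrightarrow>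
     sets lam = sets borel \<and> prob_space lam \<and>
     (\<forall>i\<in>{1..M}. 0 \<le> p i) \<and> (\<Sum>i\<in>{1..M}. p i) = 1 \<and>
     (\<forall>i\<in>{1..M}. \<forall>j\<in>{1..M}. 0 \<le> P i j \<and> (\<not> Adm i j \<longrightarrow> P i j = 0)) \<and>
     (\<forall>i\<in>{1..M}. (\<Sum>j\<in>{1..M}. P i j) = 1) \<and>
     (\<forall>(m::int) (k::nat) (a::nat \<Rightarrow> nat). (\<forall>j\<le>k. a j \<in> {1..M}) \<longrightarrow>
        measure lam {\<omega>. \<forall>j\<le>k. \<omega> (m + int j) = a j}
          = p (a 0) * (\<Prod>j<k. P (a j) (a (Suc j))))"

definition symmetric_markov :: "nat \<Rightarrow> (nat \<Rightarrow> real) \<Rightarrow> (nat \<Rightarrow> nat \<Rightarrow> real) \<Rightarrow> bool" where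
  "symmetric_markov N p P \<longleftrightarrow>
     (\<forall>i\<in>{1..N}. p i = p (i + N)) \<and>
     (\<forall>i\<in>{1..N}. \<forall>j\<in>{1..N}. P i j = P (i + N) (j + N) \<and> P i (j + N) = P (i + N) j)"

definition fiber :: "('s \<times> real) set \<Rightarrow> 's \<Rightarrow> real set" where
  "fiber B \<xi> = {x. (\<xi>, x) \<in> B}"

definition nbhd :: "real \<Rightarrow> real set \<Rightarrow> real set" where
  "nbhd \<epsilon> S = {x. \<exists>y\<in>S. \<bar>x - y\<bar> < \<epsilon>}"

definition bony_graph :: "(int \<Rightarrow> nat) set \<Rightarrow> (int \<Rightarrow> nat) measure \<Rightarrow> ((int \<Rightarrow> nat) \<times> real) set \<Rightarrow> bool" where
  "bony_graph S lam B \<longleftrightarrow>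
     B \<subseteq> S \<times> unitI \<and>
     (AE \<xi> in lam. \<xi> \<in> S \<longrightarrow> (\<exists>x. fiber B \<xi> = {x})) \<and>
     (\<forall>\<xi>\<in>S. is_interval (fiber B \<xi>) \<and> fiber B \<xi> \<noteq> {})"

definition graph_continuous :: "((int \<Rightarrow> nat) \<times> real) set \<Rightarrow> bool" where
  "graph_continuous B \<longleftrightarrow>
     (\<forall>\<xi>\<in>fst ` B. \<forall>\<epsilon>>0. \<exists>\<delta>>0. \<forall>\<eta>\<in>fst ` B.
        seq_dist \<eta> \<xi> < \<delta> \<longrightarrow> fiber B \<eta> \<subseteq> nbhd \<epsilon> (fiber B \<xi>))"

definition continuous_bony_graph where
  "continuous_bony_graph S lam B \<longleftrightarrow> bony_graph S lam B \<and> graph_continuous B"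

definition bi_bony_graph where
  "bi_bony_graph S lam B \<longleftrightarrow> (\<exists>B1 B2. B = B1 \<union> B2 \<and> bony_graph S lam B1 \<and> bony_graph S lam B2)"

definition continuous_bi_bony_graph where
  "continuous_bi_bony_graph S lam B \<longleftrightarrow>
     (\<exists>B1 B2. B = B1 \<union> B2 \<and> continuous_bony_graph S lam B1 \<and> continuous_bony_graph S lam B2)"

end

theory Submission
  imports Defs
begin


lemma inj_cont_mono_aux:
  fixes f :: "real \<Rightarrow> real"
  assumes cont: "continuous_on {0..1} f" and inj: "inj_on f {0..1}" and lt: "f 0 < f 1"
    and xy: "0 \<le> x" "x < y" "y \<le> 1"
  shows "f x < f y"
proof -
  have A: "f 0 < f z \<and> f z < f 1" if "0 < z" "z < 1" for z
    using continuous_inj_imp_mono[of 0 z 1 f, OF that cont inj] lt by auto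
  show ?thesis
  proof (cases "x = 0")
    case True
    then show ?thesis using A[of y] xy lt by (cases "y = 1") auto
  next
    case False
    hence x0: "0 < x" using xy by auto
    show ?thesis
    proof (cases "y = 1")
      case True then show ?thesis using A[of x] x0 xy by auto
    next
      case False
      hence y1: "y < 1" using xy by auto
      have c: "continuous_on {0..y} f" using continuous_on_subset[OF cont] y1 by auto
      have i: "inj_on f {0..y}" using inj_on_subset[OF inj] y1 by auto
      from continuous_inj_imp_mono[of 0 x y f, OF x0 xy(2) c i] A[of y] y1 x0 xy
      show ?thesis by auto
    qed
  qed
qed

lemma inj_cont_strict:
  fixes f :: "real \<Rightarrow> real"
  assumes cont: "continuous_on {0..1} f" and inj: "inj_on f {0..1}"
  shows "(\<forall>x\<in>{0..1}. \<forall>y\<in>{0..1}. x < y \<longrightarrow> f x < f y) \<or> (\<forall>x\<in>{0..1}. \<forall>y\<in>{0..1}. x < y \<longrightarrow> f y < f x)"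
proof -
  have "f 0 \<noteq> f 1" using inj by (auto dest: inj_onD)
  then consider "f 0 < f 1" | "f 1 < f 0" by linarith
  then show ?thesis
  proof cases
    case 1 then show ?thesis using inj_cont_mono_aux[OF cont inj] by auto
  next
    case 2
    have c: "continuous_on {0..1} (\<lambda>x. - f x)" using cont by (intro continuous_intros)
    have i: "inj_on (\<lambda>x. - f x) {0..1}" using inj by (auto simp: inj_on_def)
    show ?thesis using inj_cont_mono_aux[OF c i] 2 by force
  qed
qed

lemma C1_strict:
  assumes "C1_diffeo_onto_image g"
  shows "(\<forall>x\<in>unitI. \<forall>y\<in>unitI. x < y \<longrightarrow> g x < g y) \<or> (\<forall>x\<in>unitI. \<forall>y\<in>unitI. x < y \<longrightarrow> g y < g x)"
proof -
  obtain h g' h' where h: "\<forall>x\<in>unitI. h (g x) = x"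
    and d: "\<forall>x\<in>unitI. (g has_real_derivative g' x) (at x within unitI)"
    using assms unfolding C1_diffeo_onto_image_def by blast
  have "continuous_on unitI g" using d by (intro DERIV_continuous_on) auto
  moreover have "inj_on g unitI" using h by (metis inj_on_inverseI)
  ultimately show ?thesis using inj_cont_strict unfolding unitI_def by blast
qed

lemma IPIR_cover:
  assumes "\<forall>i\<in>{1..N}. C1_diffeo_onto_image (f i)" "i \<in> {1..N}"
  shows "i \<in> IP N f \<or> i \<in> IR N f"
proof -
  have "C1_diffeo_onto_image (f i)" using assms by blast
  from C1_strict[OF this] show ?thesis using assms(2) unfolding IP_def IR_def by blast
qed

lemma IPIR_disj: "i \<in> IP N f \<Longrightarrow> i \<in> IR N f \<Longrightarrow> False"
proof -
  assume a: "i \<in> IP N f" "i \<in> IR N f"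
  have u: "(0::real) \<in> unitI" "(1::real) \<in> unitI" unfolding unitI_def by auto
  from a have "f i 0 < f i 1" "f i 1 < f i 0" unfolding IP_def IR_def using u by auto
  then show False by simp
qed

lemma IP_range: "i \<in> IP N f \<Longrightarrow> 1 \<le> i \<and> i \<le> N" unfolding IP_def by auto
lemma IR_range: "i \<in> IR N f \<Longrightarrow> 1 \<le> i \<and> i \<le> N" unfolding IR_def by auto



definition twin :: "nat \<Rightarrow> nat \<Rightarrow> nat" where "twin N i = (if i \<le> N then i + N else i - N)"
definition sig :: "nat \<Rightarrow> (int \<Rightarrow> nat) \<Rightarrow> (int \<Rightarrow> nat)" where "sig N \<omega> = (\<lambda>n. twin N (\<omega> n))"

fun hf :: "nat set \<Rightarrow> (int \<Rightarrow> nat) \<Rightarrow> nat \<Rightarrow> bool" where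
  "hf R \<xi> 0 = False"
| "hf R \<xi> (Suc m) = (hf R \<xi> m \<noteq> (\<xi> (int m) \<in> R))"

fun hb :: "nat set \<Rightarrow> (int \<Rightarrow> nat) \<Rightarrow> nat \<Rightarrow> bool" where
  "hb R \<xi> 0 = False"
| "hb R \<xi> (Suc m) = (hb R \<xi> m \<noteq> (\<xi> (- int m - 1) \<in> R))"

definition hh :: "nat set \<Rightarrow> (int \<Rightarrow> nat) \<Rightarrow> int \<Rightarrow> bool" where
  "hh R \<xi> n = (if n \<ge> 0 then hf R \<xi> (nat n) else hb R \<xi> (nat (- n)))"

definition lift :: "nat \<Rightarrow> nat set \<Rightarrow> (int \<Rightarrow> nat) \<Rightarrow> (int \<Rightarrow> nat)" where
  "lift N R \<xi> = (\<lambda>n. if hh R \<xi> n then \<xi> n + N else \<xi> n)"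

lemma hh0: "hh R \<xi> 0 = False" by (simp add: hh_def)

lemma hh_step: "hh R \<xi> (n + 1) = (hh R \<xi> n \<noteq> (\<xi> n \<in> R))"
proof (cases "n \<ge> 0")
  case True
  then obtain m where m: "n = int m" by (metis nonneg_eq_int)
  have "nat (int m + 1) = Suc m" by simp
  then show ?thesis using m by (simp add: hh_def)
next
  case False
  define m where "m = nat (-n) - 1"
  have m: "n = - int (Suc m)" using False unfolding m_def by simp
  have nn: "nat (- n) = Suc m" using m by simp
  have a: "hh R \<xi> n = hb R \<xi> (Suc m)" using False nn by (simp only: hh_def if_False)
  have b: "hh R \<xi> (n + 1) = hb R \<xi> m"
  proof (cases m)
    case 0 then show ?thesis using m by (simp add: hh_def)
  next
    case (Suc k)
    have ng: "\<not> n + 1 \<ge> 0" and nn2: "nat (- (n + 1)) = m" using m Suc by auto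
    show ?thesis using ng nn2 by (simp only: hh_def if_False)
  qed
  have "n = - int m - 1" using m by simp
  then have c: "\<xi> n = \<xi> (- int m - 1)" by simp
  show ?thesis using a b c by auto
qed

lemma hf_agree: "(\<forall>i. \<bar>i\<bar> < int k \<longrightarrow> \<xi> i = \<eta> i) \<Longrightarrow> m < k \<Longrightarrow> hf R \<xi> m = hf R \<eta> m"
  by (induction m) auto

lemma hb_agree: "(\<forall>i. \<bar>i\<bar> < int k \<longrightarrow> \<xi> i = \<eta> i) \<Longrightarrow> m < k \<Longrightarrow> hb R \<xi> m = hb R \<eta> m"
proof (induction m)
  case (Suc m)
  have "\<xi> (- int m - 1) = \<eta> (- int m - 1)" using Suc.prems by auto
  then show ?case using Suc by auto
qed simp

lemma lift_agree:
  assumes "\<forall>i. \<bar>i\<bar> < int k \<longrightarrow> \<xi> i = \<eta> i" "\<bar>n\<bar> < int k"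
  shows "lift N R \<xi> n = lift N R \<eta> n"
proof -
  have "hh R \<xi> n = hh R \<eta> n"
    using hf_agree[OF assms(1), of "nat n" R] hb_agree[OF assms(1), of "nat (-n)" R] assms(2)
    unfolding hh_def by auto
  then show ?thesis using assms unfolding lift_def by auto
qed

context
  fixes N :: nat and f :: "nat \<Rightarrow> real \<Rightarrow> real"
  assumes cover: "\<And>i. i \<in> {1..N} \<Longrightarrow> i \<in> IP N f \<or> i \<in> IR N f"
begin

lemma Amat_fwd_aux:
  assumes "Amat N f i k" "Amat N f i (k + N)" "1 \<le> k" "k \<le> N"
  shows False
proof (cases "i \<le> N")
  case True
  have "i \<in> IP N f" using assms(1) True assms(4) unfolding Amat_def by auto
  moreover have "i \<in> IR N f" using assms(2) True assms(3) unfolding Amat_def by auto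
  ultimately show False using IPIR_disj by blast
next
  case False
  have o: "i \<notin> IP N f" "i \<notin> IR N f" using False IP_range[of i N f] IR_range[of i N f] by auto
  have "i - N \<in> IR N f" using assms(1) False o assms(4) unfolding Amat_def by auto
  moreover have "i - N \<in> IP N f" using assms(2) False o assms(3) unfolding Amat_def by auto
  ultimately show False using IPIR_disj by blast
qed

lemma Amat_fwd:
  assumes "Amat N f i j" "Amat N f i j'" "bar N j = bar N j'"
    "j \<in> {1..2*N}" "j' \<in> {1..2*N}"
  shows "j = j'"
proof (rule ccontr)
  assume ne: "j \<noteq> j'"
  then consider "j \<le> N" "j' = j + N" | "j' \<le> N" "j = j' + N"
    using assms(3-5) unfolding bar_def by (cases "j \<le> N"; cases "j' \<le> N") auto
  then show False
  proof cases
    case 1 then show False using Amat_fwd_aux[of i j] assms by auto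
  next
    case 2 then show False using Amat_fwd_aux[of i j'] assms by auto
  qed
qed

lemma Amat_bwd_aux:
  assumes "Amat N f k j" "Amat N f (k + N) j" "1 \<le> k" "k \<le> N"
  shows False
proof -
  have o: "k + N \<notin> IP N f" "k + N \<notin> IR N f" using assms IP_range[of "k+N" N f] IR_range[of "k+N" N f] by auto
  have o2: "k - N \<notin> IP N f" "k - N \<notin> IR N f" using assms IP_range[of "k-N" N f] IR_range[of "k-N" N f]
    by (cases "k - N = 0"; auto)+
  have d: "\<not> (k \<in> IP N f \<and> k \<in> IR N f)" using IPIR_disj by blast
  have "(k \<in> IP N f \<and> j \<le> N) \<or> (k \<in> IR N f \<and> j > N)"
    using assms(1) o o2 assms(4) unfolding Amat_def by auto
  moreover have "(k \<in> IP N f \<and> j > N) \<or> (k \<in> IR N f \<and> j \<le> N)"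
    using assms(2) o assms(3) unfolding Amat_def by auto
  ultimately show False using d by auto
qed

lemma Amat_bwd:
  assumes "Amat N f i j" "Amat N f i' j" "bar N i = bar N i'"
    "i \<in> {1..2*N}" "i' \<in> {1..2*N}"
  shows "i = i'"
proof (rule ccontr)
  assume ne: "i \<noteq> i'"
  then consider "i \<le> N" "i' = i + N" | "i' \<le> N" "i = i' + N"
    using assms(3-5) unfolding bar_def by (cases "i \<le> N"; cases "i' \<le> N") auto
  then show False
  proof cases
    case 1 then show False using Amat_bwd_aux[of i j] assms by auto
  next
    case 2 then show False using Amat_bwd_aux[of i' j] assms by auto
  qed
qed

lemma sheet_unique:
  assumes w: "\<omega> \<in> SigmaA N f" and w': "\<omega>' \<in> SigmaA N f"
    and p: "proj N \<omega> = proj N \<omega>'" and z: "\<omega> 0 = \<omega>' 0"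
  shows "\<omega> = \<omega>'"
proof -
  have b: "bar N (\<omega> n) = bar N (\<omega>' n)" for n using p unfolding proj_def by meson
  have r: "\<omega> n \<in> {1..2*N}" "\<omega>' n \<in> {1..2*N}" for n using w w' unfolding SigmaA_def by auto
  have a: "Amat N f (\<omega> n) (\<omega> (n+1))" "Amat N f (\<omega>' n) (\<omega>' (n+1))" for n
    using w w' unfolding SigmaA_def by auto
  have fw: "\<omega> (int m) = \<omega>' (int m)" for m
  proof (induction m)
    case 0 then show ?case using z by simp
  next
    case (Suc m)
    have "\<omega> (int m + 1) = \<omega>' (int m + 1)"
      using Amat_fwd[OF a(1)[of "int m"] _ b r(1) r(2)] a(2)[of "int m"] Suc by simp
    then show ?case by (simp add: algebra_simps)
  qed
  have bw: "\<omega> (- int m) = \<omega>' (- int m)" for m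
  proof (induction m)
    case 0 then show ?case using z by simp
  next
    case (Suc m)
    have e: "- int m = (- int (Suc m)) + 1" by simp
    have "\<omega> (- int (Suc m)) = \<omega>' (- int (Suc m))"
      using Amat_bwd[OF a(1)[of "- int (Suc m)"] _ b r(1) r(2)] a(2)[of "- int (Suc m)"] Suc
      by (simp only: e[symmetric])
    then show ?case .
  qed
  show ?thesis
  proof
    fix n :: int
    show "\<omega> n = \<omega>' n"
      using fw[of "nat n"] bw[of "nat (-n)"] by (cases "n \<ge> 0") auto
  qed
qed

lemma lift_props:
  assumes "\<xi> \<in> SigmaN N"
  shows "lift N (IR N f) \<xi> \<in> SigmaA N f" "lift N (IR N f) \<xi> 0 \<le> N" "proj N (lift N (IR N f) \<xi>) = \<xi>"
proof -
  let ?l = "lift N (IR N f) \<xi>"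
  have r: "\<xi> n \<in> {1..N}" for n using assms unfolding SigmaN_def by auto
  show "?l 0 \<le> N" using r[of 0] by (simp add: lift_def hh0)
  show "proj N ?l = \<xi>"
  proof
    fix n show "proj N ?l n = \<xi> n" using r[of n] unfolding proj_def lift_def bar_def by auto
  qed
  have "Amat N f (?l n) (?l (n+1))" for n
  proof -
    have c: "\<xi> n \<in> IP N f \<or> \<xi> n \<in> IR N f" using cover r by blast
    have d: "\<not> (\<xi> n \<in> IP N f \<and> \<xi> n \<in> IR N f)" using IPIR_disj by blast
    have rr: "1 \<le> \<xi> n" "\<xi> n \<le> N" "1 \<le> \<xi> (n+1)" "\<xi> (n+1) \<le> N" using r[of n] r[of "n+1"] by auto
    show ?thesis using c d rr hh_step[of "IR N f" \<xi> n] unfolding lift_def Amat_def by auto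
  qed
  moreover have "?l n \<in> {1..2*N}" for n using r[of n] unfolding lift_def by auto
  ultimately show "?l \<in> SigmaA N f" unfolding SigmaA_def by auto
qed

lemma twin_range: "i \<in> {1..2*N} \<Longrightarrow> twin N i \<in> {1..2*N}" unfolding twin_def by auto
lemma twin_twin: "i \<in> {1..2*N} \<Longrightarrow> twin N (twin N i) = i" unfolding twin_def by auto
lemma bar_twin: "i \<in> {1..2*N} \<Longrightarrow> bar N (twin N i) = bar N i" unfolding twin_def bar_def by auto

lemma IP_out: "x > N \<Longrightarrow> x \<notin> IP N f" "x = 0 \<Longrightarrow> x \<notin> IP N f"
  using IP_range[of x N f] by auto
lemma IR_out: "x > N \<Longrightarrow> x \<notin> IR N f" "x = 0 \<Longrightarrow> x \<notin> IR N f"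
  using IR_range[of x N f] by auto

lemma Amat_twin:
  assumes "i \<in> {1..2*N}" "j \<in> {1..2*N}"
  shows "Amat N f (twin N i) (twin N j) = Amat N f i j"
proof (cases "i \<le> N")
  case True
  have o: "i + N \<notin> IP N f" "i + N \<notin> IR N f" using assms True by (auto intro!: IP_out(1) IR_out(1))
  show ?thesis
  proof (cases "j \<le> N")
    case True2: True
    show ?thesis using True True2 o assms unfolding Amat_def twin_def by simp
  next
    case False2: False
    have "j - N \<le> N" using assms by auto
    then show ?thesis using True False2 o assms unfolding Amat_def twin_def by simp
  qed
next
  case False
  have o: "i \<notin> IP N f" "i \<notin> IR N f" using False by (auto intro!: IP_out(1) IR_out(1))
  have o2: "i - N - N \<notin> IP N f" "i - N - N \<notin> IR N f" using False assms by (auto intro!: IP_out(2) IR_out(2))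
  show ?thesis
  proof (cases "j \<le> N")
    case True2: True
    show ?thesis using False True2 o o2 assms unfolding Amat_def twin_def by simp
  next
    case False2: False
    have "j - N \<le> N" using assms by auto
    then show ?thesis using False False2 o o2 assms unfolding Amat_def twin_def by simp
  qed
qed

lemma sig_SigmaA: "\<omega> \<in> SigmaA N f \<Longrightarrow> sig N \<omega> \<in> SigmaA N f"
  unfolding SigmaA_def sig_def using Amat_twin twin_range by auto

lemma sig_sig: "\<omega> \<in> SigmaA N f \<Longrightarrow> sig N (sig N \<omega>) = \<omega>"
  unfolding SigmaA_def sig_def using twin_twin by auto

lemma proj_sig: "\<omega> \<in> SigmaA N f \<Longrightarrow> proj N (sig N \<omega>) = proj N \<omega>"
  unfolding SigmaA_def sig_def proj_def using bar_twin by auto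

lemma proj_SigmaN: "\<omega> \<in> SigmaA N f \<Longrightarrow> proj N \<omega> \<in> SigmaN N"
proof -
  assume w: "\<omega> \<in> SigmaA N f"
  have "bar N (\<omega> n) \<in> {1..N}" for n
  proof -
    have "\<omega> n \<in> {1..2*N}" using w unfolding SigmaA_def by auto
    then show ?thesis unfolding bar_def by auto
  qed
  then show ?thesis unfolding SigmaN_def proj_def by auto
qed

lemma lift_proj:
  assumes w: "\<omega> \<in> SigmaA N f"
  shows "\<omega> 0 \<le> N \<Longrightarrow> lift N (IR N f) (proj N \<omega>) = \<omega>"
    and "\<not> \<omega> 0 \<le> N \<Longrightarrow> lift N (IR N f) (proj N \<omega>) = sig N \<omega>"
proof -
  note L = lift_props[OF proj_SigmaN[OF w]]
  have r: "\<omega> 0 \<in> {1..2*N}" using w unfolding SigmaA_def by auto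
  show "\<omega> 0 \<le> N \<Longrightarrow> lift N (IR N f) (proj N \<omega>) = \<omega>"
  proof (rule sheet_unique[OF L(1) w L(3)])
    assume "\<omega> 0 \<le> N"
    moreover have "bar N (lift N (IR N f) (proj N \<omega>) 0) = bar N (\<omega> 0)"
      using fun_cong[OF L(3), of 0] unfolding proj_def by simp
    ultimately show "lift N (IR N f) (proj N \<omega>) 0 = \<omega> 0"
      using L(2) unfolding bar_def by (auto split: if_splits)
  qed
  show "\<not> \<omega> 0 \<le> N \<Longrightarrow> lift N (IR N f) (proj N \<omega>) = sig N \<omega>"
  proof (rule sheet_unique[OF L(1) sig_SigmaA[OF w]])
    show "proj N (lift N (IR N f) (proj N \<omega>)) = proj N (sig N \<omega>)" using L(3) proj_sig[OF w] by simp
    assume "\<not> \<omega> 0 \<le> N"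
    moreover have "bar N (lift N (IR N f) (proj N \<omega>) 0) = bar N (\<omega> 0)"
      using fun_cong[OF L(3), of 0] unfolding proj_def by simp
    ultimately show "lift N (IR N f) (proj N \<omega>) 0 = sig N \<omega> 0"
      using L(2) r unfolding bar_def sig_def twin_def by (auto split: if_splits)
  qed
qed

end


lemma cyl_open:
  fixes \<xi> :: "int \<Rightarrow> nat"
  assumes "finite K"
  shows "open {\<omega>::int \<Rightarrow> nat. \<forall>n\<in>K. \<omega> n = \<xi> n}"
proof -
  have e: "{\<omega>::int \<Rightarrow> nat. \<forall>n\<in>K. \<omega> n = \<xi> n} = (\<Inter>n\<in>K. (\<lambda>\<omega>. \<omega> n) -` {\<xi> n})" by auto
  have "open ((\<lambda>\<omega>::int \<Rightarrow> nat. \<omega> n) -` {\<xi> n})" for n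
    by (rule open_vimage[OF discrete_topology_class.open_discrete]) simp
  then show ?thesis unfolding e using assms by (intro open_INT) auto
qed

lemma fin_dep_open:
  fixes Q :: "(int \<Rightarrow> nat) \<Rightarrow> bool"
  assumes "finite K" "\<And>\<xi> \<eta>. (\<forall>n\<in>K. \<xi> n = \<eta> n) \<Longrightarrow> Q \<xi> = Q \<eta>"
  shows "open {\<omega>. Q \<omega>}"
proof -
  have e: "{\<omega>. Q \<omega>} = (\<Union>\<xi>\<in>{\<omega>. Q \<omega>}. {\<omega>. \<forall>n\<in>K. \<omega> n = \<xi> n})"
  proof
    show "{\<omega>. Q \<omega>} \<subseteq> (\<Union>\<xi>\<in>{\<omega>. Q \<omega>}. {\<omega>. \<forall>n\<in>K. \<omega> n = \<xi> n})" by blast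
    show "(\<Union>\<xi>\<in>{\<omega>. Q \<omega>}. {\<omega>. \<forall>n\<in>K. \<omega> n = \<xi> n}) \<subseteq> {\<omega>. Q \<omega>}"
      using assms(2) by blast
  qed
  have "open (\<Union>\<xi>\<in>{\<omega>. Q \<omega>}. {\<omega>. \<forall>n\<in>K. \<omega> n = \<xi> n})"
    using cyl_open[OF assms(1)] by (intro open_UN) auto
  then show ?thesis by (simp only: e[symmetric])
qed

lemma fin_dep_sets:
  fixes Q :: "(int \<Rightarrow> nat) \<Rightarrow> bool"
  assumes "finite K" "\<And>\<xi> \<eta>. (\<forall>n\<in>K. \<xi> n = \<eta> n) \<Longrightarrow> Q \<xi> = Q \<eta>"
  shows "{\<omega>. Q \<omega>} \<in> sets borel"
  using fin_dep_open[OF assms] by (rule borel_open)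

lemma fin_dep_cont:
  fixes g :: "(int \<Rightarrow> nat) \<Rightarrow> 'b::topological_space"
  assumes "finite K" "\<And>\<xi> \<eta>. (\<forall>n\<in>K. \<xi> n = \<eta> n) \<Longrightarrow> g \<xi> = g \<eta>"
  shows "continuous_on UNIV g"
  unfolding continuous_on_open_vimage[OF open_UNIV]
proof (intro allI impI)
  fix B :: "'b set"
  have "open {\<omega>. g \<omega> \<in> B}"
  proof (rule fin_dep_open[OF assms(1)])
    fix \<xi> \<eta> :: "int \<Rightarrow> nat" assume "\<forall>n\<in>K. \<xi> n = \<eta> n"
    then have "g \<xi> = g \<eta>" by (rule assms(2))
    then show "(g \<xi> \<in> B) = (g \<eta> \<in> B)" by simp
  qed
  then show "open (g -` B \<inter> UNIV)" by (simp add: vimage_def)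
qed

lemma fin_dep_meas:
  fixes F :: "(int \<Rightarrow> nat) \<Rightarrow> (int \<Rightarrow> nat)"
  assumes "\<And>n. \<exists>K. finite K \<and> (\<forall>\<xi> \<eta>. (\<forall>i\<in>K. \<xi> i = \<eta> i) \<longrightarrow> F \<xi> n = F \<eta> n)"
  shows "F \<in> borel_measurable borel"
proof (rule borel_measurable_continuous_onI, rule continuous_on_coordinatewise_then_product)
  fix n
  obtain K where K: "finite K" "\<forall>\<xi> \<eta>. (\<forall>i\<in>K. \<xi> i = \<eta> i) \<longrightarrow> F \<xi> n = F \<eta> n" using assms by blast
  show "continuous_on UNIV (\<lambda>x. F x n)" by (rule fin_dep_cont[OF K(1)]) (use K(2) in blast)
qed

lemma proj_meas: "proj N \<in> borel_measurable borel"
  by (rule fin_dep_meas, rule_tac x="{n}" in exI) (auto simp: proj_def)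

lemma sig_meas: "sig N \<in> borel_measurable borel"
  by (rule fin_dep_meas, rule_tac x="{n}" in exI) (auto simp: sig_def)

lemma lift_meas: "lift N R \<in> borel_measurable borel"
proof (rule fin_dep_meas)
  fix n :: int
  show "\<exists>K. finite K \<and> (\<forall>\<xi> \<eta>. (\<forall>i\<in>K. \<xi> i = \<eta> i) \<longrightarrow> lift N R \<xi> n = lift N R \<eta> n)"
  proof (intro exI conjI allI impI)
    show "finite {-\<bar>n\<bar>..\<bar>n\<bar>}" by simp
    fix \<xi> \<eta> :: "int \<Rightarrow> nat"
    assume a: "\<forall>i\<in>{-\<bar>n\<bar>..\<bar>n\<bar>}. \<xi> i = \<eta> i"
    have "\<forall>i. \<bar>i\<bar> < int (nat \<bar>n\<bar> + 1) \<longrightarrow> \<xi> i = \<eta> i"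
    proof (intro allI impI)
      fix i :: int assume "\<bar>i\<bar> < int (nat \<bar>n\<bar> + 1)"
      then have "i \<in> {-\<bar>n\<bar>..\<bar>n\<bar>}" by auto
      then show "\<xi> i = \<eta> i" using a by blast
    qed
    then show "lift N R \<xi> n = lift N R \<eta> n" by (rule lift_agree) simp
  qed
qed

lemma seq_dist_le:
  fixes F :: "(int \<Rightarrow> nat) \<Rightarrow> (int \<Rightarrow> nat)"
  assumes agree: "\<And>k \<xi> \<eta> n. (\<forall>i. \<bar>i\<bar> < int k \<longrightarrow> \<xi> i = \<eta> i) \<Longrightarrow> \<bar>n\<bar> < int k \<Longrightarrow> F \<xi> n = F \<eta> n"
  shows "seq_dist (F \<eta>) (F \<xi>) \<le> seq_dist \<eta> \<xi>"
proof (cases "F \<eta> = F \<xi>")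
  case True
  then show ?thesis by (simp add: seq_dist_def)
next
  case Fne: False
  then have ne: "\<eta> \<noteq> \<xi>" by auto
  define k where "k = (LEAST k::nat. \<exists>n::int. \<bar>n\<bar> = int k \<and> \<eta> n \<noteq> \<xi> n)"
  define k' where "k' = (LEAST k::nat. \<exists>n::int. \<bar>n\<bar> = int k \<and> F \<eta> n \<noteq> F \<xi> n)"
  have small: "\<forall>i. \<bar>i\<bar> < int k \<longrightarrow> \<eta> i = \<xi> i"
  proof (intro allI impI)
    fix i :: int assume "\<bar>i\<bar> < int k"
    then have "nat \<bar>i\<bar> < k" by simp
    then have "\<not> (\<exists>n::int. \<bar>n\<bar> = int (nat \<bar>i\<bar>) \<and> \<eta> n \<noteq> \<xi> n)"
      unfolding k_def by (rule not_less_Least)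
    then show "\<eta> i = \<xi> i" by auto
  qed
  obtain n0 where n0: "F \<eta> n0 \<noteq> F \<xi> n0" using Fne by auto
  have ex: "\<exists>k::nat. \<exists>n::int. \<bar>n\<bar> = int k \<and> F \<eta> n \<noteq> F \<xi> n"
    by (rule exI[of _ "nat \<bar>n0\<bar>"], rule exI[of _ n0]) (simp add: n0)
  from LeastI_ex[OF ex] obtain n1 where n1: "\<bar>n1\<bar> = int k'" "F \<eta> n1 \<noteq> F \<xi> n1"
    unfolding k'_def by blast
  have "k \<le> k'"
  proof (rule ccontr)
    assume "\<not> k \<le> k'"
    then have "\<bar>n1\<bar> < int k" using n1 by simp
    then have "F \<eta> n1 = F \<xi> n1" using agree[OF small] by blast
    then show False using n1 by simp
  qed
  then have "(1/2::real) ^ k' \<le> (1/2) ^ k" by (rule power_decreasing) auto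
  then show ?thesis using Fne ne unfolding seq_dist_def k_def k'_def by simp
qed



lemma interval_cover:
  fixes J :: "int set"
  assumes "finite J"
  shows "\<exists>m k. \<forall>x\<in>J. \<exists>j\<le>k. x = m + int j"
proof (cases "J = {}")
  case True then show ?thesis by auto
next
  case False
  show ?thesis
  proof (rule exI[of _ "Min J"], rule exI[of _ "nat (Max J - Min J)"], intro ballI)
    fix x assume x: "x \<in> J"
    have a: "Min J \<le> x" "x \<le> Max J" using x assms by auto
    show "\<exists>j\<le>nat (Max J - Min J). x = Min J + int j"
      by (rule exI[of _ "nat (x - Min J)"]) (use a in auto)
  qed
qed

context
  fixes N :: nat and f :: "nat \<Rightarrow> real \<Rightarrow> real"
    and p :: "nat \<Rightarrow> real" and P :: "nat \<Rightarrow> nat \<Rightarrow> real"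
    and lam :: "(int \<Rightarrow> nat) measure"
  assumes mm: "markov_measure (2 * N) (Amat N f) p P lam"
    and sym: "symmetric_markov N p P"
begin

lemma sets_lam: "sets lam = sets borel" using mm unfolding markov_measure_def by blast
lemma space_lam: "space lam = UNIV" using sets_eq_imp_space_eq[OF sets_lam] by simp
lemma ps: "prob_space lam" using mm unfolding markov_measure_def by blast
lemma fm: "finite_measure lam" using ps by (rule prob_space.finite_measure)

lemma cylF:
  assumes "\<forall>j\<le>k. a j \<in> {1..2*N}"
  shows "measure lam {\<omega>. \<forall>j\<le>k. \<omega> (m + int j) = a j} = p (a 0) * (\<Prod>j<k. P (a j) (a (Suc j)))"
  using mm assms unfolding markov_measure_def by blast

lemma p_sum: "(\<Sum>i\<in>{1..2*N}. p i) = 1" using mm unfolding markov_measure_def by blast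

lemma P_zero: "i \<in> {1..2*N} \<Longrightarrow> j \<in> {1..2*N} \<Longrightarrow> \<not> Amat N f i j \<Longrightarrow> P i j = 0"
  using mm unfolding markov_measure_def by blast

lemma fd_sets:
  fixes Q :: "(int \<Rightarrow> nat) \<Rightarrow> bool"
  assumes "finite K" "\<And>\<xi> \<eta>. (\<forall>n\<in>K. \<xi> n = \<eta> n) \<Longrightarrow> Q \<xi> = Q \<eta>"
  shows "{\<omega>. Q \<omega>} \<in> sets lam"
  using fin_dep_sets[OF assms] sets_lam by simp

lemma emeas_eq: "emeasure lam A = ennreal (measure lam A)"
  using fm by (rule finite_measure.emeasure_eq_measure)

lemma single_meas:
  assumes "i \<in> {1..2*N}"
  shows "measure lam {\<omega>. \<omega> n = i} = p i"
proof -
  have "{\<omega>. \<omega> n = i} = {\<omega>. \<forall>j\<le>0. \<omega> (n + int j) = (\<lambda>_. i) j}" by auto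
  then show ?thesis using cylF[of 0 "\<lambda>_. i" n] assms by simp
qed

lemma AE_range: "AE \<omega> in lam. \<omega> n \<in> {1..2*N}"
proof -
  have e: "{\<omega>. \<omega> n \<in> {1..2*N}} = (\<Union>i\<in>{1..2*N}. {\<omega>. \<omega> n = i})" by auto
  have "measure lam (\<Union>i\<in>{1..2*N}. {\<omega>. \<omega> n = i}) = (\<Sum>i\<in>{1..2*N}. measure lam {\<omega>. \<omega> n = i})"
  proof (rule measure_finite_Union)
    show "(\<lambda>i. {\<omega>. \<omega> n = i}) ` {1..2*N} \<subseteq> sets lam"
    proof
      fix A assume "A \<in> (\<lambda>i. {\<omega>. \<omega> n = i}) ` {1..2*N}"
      then obtain i where "A = {\<omega>. \<omega> n = i}" by blast
      moreover have "{\<omega>. \<omega> n = i} \<in> sets lam" by (rule fd_sets[of "{n}"]) auto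
      ultimately show "A \<in> sets lam" by simp
    qed
    show "disjoint_family_on (\<lambda>i. {\<omega>. \<omega> n = i}) {1..2*N}" unfolding disjoint_family_on_def by auto
    show "emeasure lam {\<omega>. \<omega> n = i} \<noteq> \<infinity>" for i using emeas_eq by simp
  qed simp
  also have "\<dots> = (\<Sum>i\<in>{1..2*N}. p i)" by (rule sum.cong) (auto simp: single_meas)
  finally have "measure lam {\<omega>. \<omega> n \<in> {1..2*N}} = 1" using e p_sum by simp
  then have "AE \<omega> in lam. \<omega> \<in> {\<omega>. \<omega> n \<in> {1..2*N}}" by (rule prob_space.AE_prob_1[OF ps])
  then show ?thesis by simp
qed

lemma AE_pair:
  assumes "i \<in> {1..2*N}" "j \<in> {1..2*N}" "\<not> Amat N f i j"
  shows "AE \<omega> in lam. \<not> (\<omega> n = i \<and> \<omega> (n + 1) = j)"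
proof -
  let ?a = "\<lambda>x::nat. if x = 0 then i else j"
  have e: "{\<omega>. \<omega> n = i \<and> \<omega> (n + 1) = j} = {\<omega>. \<forall>jj\<le>1. \<omega> (n + int jj) = ?a jj}"
  proof (intro set_eqI iffI)
    fix \<omega> assume "\<omega> \<in> {\<omega>. \<omega> n = i \<and> \<omega> (n + 1) = j}"
    then show "\<omega> \<in> {\<omega>. \<forall>jj\<le>1. \<omega> (n + int jj) = ?a jj}" by (auto simp: le_Suc_eq)
  next
    fix \<omega> assume a: "\<omega> \<in> {\<omega>. \<forall>jj\<le>1. \<omega> (n + int jj) = ?a jj}"
    have "\<omega> (n + int 0) = ?a 0" "\<omega> (n + int 1) = ?a 1" using a by blast+
    then show "\<omega> \<in> {\<omega>. \<omega> n = i \<and> \<omega> (n + 1) = j}" by simp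
  qed
  have "\<forall>jj\<le>1. ?a jj \<in> {1..2*N}" using assms by auto
  then have "measure lam {\<omega>. \<omega> n = i \<and> \<omega> (n + 1) = j} = p i * P i j"
    unfolding e by (subst cylF) auto
  also have "\<dots> = 0" using P_zero[OF assms] by simp
  finally have m0: "measure lam {\<omega>. \<omega> n = i \<and> \<omega> (n + 1) = j} = 0" .
  have s: "{\<omega>. \<omega> n = i \<and> \<omega> (n + 1) = j} \<in> sets lam" by (rule fd_sets[of "{n, n+1}"]) auto
  have "{\<omega>. \<omega> n = i \<and> \<omega> (n + 1) = j} \<in> null_sets lam"
    using s m0 emeas_eq by (simp add: null_sets_def)
  from AE_not_in[OF this] show ?thesis by simp
qed

lemma AE_SigmaA: "AE \<omega> in lam. \<omega> \<in> SigmaA N f"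
proof -
  have 1: "AE \<omega> in lam. \<forall>n. \<omega> n \<in> {1..2*N}" using AE_range by (simp add: AE_all_countable)
  have 2: "AE \<omega> in lam. \<forall>n. \<forall>i\<in>{1..2*N}. \<forall>j\<in>{1..2*N}. \<not> Amat N f i j \<longrightarrow> \<not> (\<omega> n = i \<and> \<omega> (n + 1) = j)"
    unfolding AE_all_countable
  proof
    fix n :: int
    show "AE \<omega> in lam. \<forall>i\<in>{1..2*N}. \<forall>j\<in>{1..2*N}. \<not> Amat N f i j \<longrightarrow> \<not> (\<omega> n = i \<and> \<omega> (n + 1) = j)"
      by (rule AE_finite_allI[OF finite_atLeastAtMost], rule AE_finite_allI[OF finite_atLeastAtMost],
          rule AE_impI, rule AE_pair)
  qed
  show ?thesis using 1 2
  proof eventually_elim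
    case (elim \<omega>)
    have r: "\<And>n. \<omega> n \<in> {1..2*N}" using elim(1) by blast
    have a: "Amat N f (\<omega> n) (\<omega> (n + 1))" for n :: int
    proof (rule ccontr)
      assume "\<not> Amat N f (\<omega> n) (\<omega> (n + 1))"
      then show False using bspec[OF bspec[OF spec[OF elim(2), of n] r[of n]] r[of "n+1"]] by simp
    qed
    show ?case unfolding SigmaA_def using r a by blast
  qed
qed

lemma F_formula:
  "measure lam {\<omega>. \<forall>j\<le>k. \<omega> (m + int j) \<in> X j}
     = (\<Sum>a\<in>(\<Pi>\<^sub>E j\<in>{..k}. X j \<inter> {1..2*N}). p (a 0) * (\<Prod>j<k. P (a j) (a (Suc j))))"
proof -
  define PE where "PE = (\<Pi>\<^sub>E j\<in>{..k}. X j \<inter> {1..2*N})"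
  define cyl where "cyl a = {\<omega>. \<forall>j\<le>k. \<omega> (m + int j) = a j}" for a :: "nat \<Rightarrow> nat"
  define T where "T = {\<omega>. \<forall>j\<le>k. \<omega> (m + int j) \<in> X j}"
  have fK: "finite ((\<lambda>j. m + int j) ` {..k})" by simp
  have cyl_sets: "cyl a \<in> sets lam" for a unfolding cyl_def
    by (rule fd_sets[OF fK]) auto
  have T_sets: "T \<in> sets lam" unfolding T_def
    by (rule fd_sets[OF fK]) auto
  have fPE: "finite PE" unfolding PE_def by (intro finite_PiE) auto
  have V: "AE \<omega> in lam. \<forall>n. \<omega> n \<in> {1..2*N}" using AE_range by (simp add: AE_all_countable)
  have "measure lam T = measure lam (\<Union>a\<in>PE. cyl a)"
  proof (rule measure_eq_AE)
    show "AE \<omega> in lam. (\<omega> \<in> T) = (\<omega> \<in> (\<Union>a\<in>PE. cyl a))"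
      using V
    proof eventually_elim
      case (elim \<omega>)
      show ?case
      proof
        assume "\<omega> \<in> T"
        then have "(\<lambda>j\<in>{..k}. \<omega> (m + int j)) \<in> PE" using elim unfolding PE_def T_def by auto
        moreover have "\<omega> \<in> cyl (\<lambda>j\<in>{..k}. \<omega> (m + int j))" unfolding cyl_def by auto
        ultimately show "\<omega> \<in> (\<Union>a\<in>PE. cyl a)" by blast
      next
        assume "\<omega> \<in> (\<Union>a\<in>PE. cyl a)"
        then obtain a where "a \<in> PE" "\<omega> \<in> cyl a" by blast
        then show "\<omega> \<in> T" unfolding PE_def cyl_def T_def by (auto simp: PiE_iff)
      qed
    qed
    show "T \<in> sets lam" by (rule T_sets)
    show "(\<Union>a\<in>PE. cyl a) \<in> sets lam" using fPE cyl_sets by (intro sets.finite_UN) auto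
  qed
  also have "\<dots> = (\<Sum>a\<in>PE. measure lam (cyl a))"
  proof (rule measure_finite_Union[OF fPE])
    show "cyl ` PE \<subseteq> sets lam" using cyl_sets by auto
    show "disjoint_family_on cyl PE"
      unfolding disjoint_family_on_def
    proof (intro ballI impI)
      fix a b assume ab: "a \<in> PE" "b \<in> PE" "a \<noteq> b"
      then obtain j where j: "j \<le> k" "a j \<noteq> b j" unfolding PE_def using PiE_ext[of a "{..k}" _ b] by blast
      then show "cyl a \<inter> cyl b = {}" unfolding cyl_def by auto
    qed
    show "emeasure lam (cyl a) \<noteq> \<infinity>" for a using emeas_eq by simp
  qed
  also have "\<dots> = (\<Sum>a\<in>PE. p (a 0) * (\<Prod>j<k. P (a j) (a (Suc j))))"
  proof (rule sum.cong[OF refl])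
    fix a assume "a \<in> PE"
    then have "\<forall>j\<le>k. a j \<in> {1..2*N}" unfolding PE_def by (auto simp: PiE_iff)
    then show "measure lam (cyl a) = p (a 0) * (\<Prod>j<k. P (a j) (a (Suc j)))"
      unfolding cyl_def by (rule cylF)
  qed
  finally show ?thesis unfolding PE_def T_def .
qed

lemma p_twin:
  assumes i: "i \<in> {1..2*N}"
  shows "p (twin N i) = p i"
proof (cases "i \<le> N")
  case True
  then have "p i = p (i + N)" using sym i unfolding symmetric_markov_def by auto
  then show ?thesis using True unfolding twin_def by simp
next
  case False
  then have k: "i - N \<in> {1..N}" "i - N + N = i" using i by auto
  then have "p (i - N) = p (i - N + N)" using sym unfolding symmetric_markov_def by blast
  then show ?thesis using False k unfolding twin_def by simp
qed

end


lemma twin_range': "i \<in> {1..2*N} \<Longrightarrow> twin N i \<in> {1..2*N}" unfolding twin_def by auto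
lemma twin_twin': "i \<in> {1..2*N} \<Longrightarrow> twin N (twin N i) = i" unfolding twin_def by auto

context
  fixes N :: nat and f :: "nat \<Rightarrow> real \<Rightarrow> real"
    and p :: "nat \<Rightarrow> real" and P :: "nat \<Rightarrow> nat \<Rightarrow> real"
    and lam :: "(int \<Rightarrow> nat) measure"
  assumes mm: "markov_measure (2 * N) (Amat N f) p P lam"
    and sym: "symmetric_markov N p P"
begin

lemma P_twin:
  assumes i: "i \<in> {1..2*N}" and j: "j \<in> {1..2*N}"
  shows "P (twin N i) (twin N j) = P i j"
proof -
  have S1: "\<And>a b. a \<in> {1..N} \<Longrightarrow> b \<in> {1..N} \<Longrightarrow> P a b = P (a + N) (b + N)"
    and S2: "\<And>a b. a \<in> {1..N} \<Longrightarrow> b \<in> {1..N} \<Longrightarrow> P a (b + N) = P (a + N) b"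
    using sym unfolding symmetric_markov_def by auto
  show ?thesis
  proof (cases "i \<le> N")
    case True
    note iT = True
    show ?thesis
    proof (cases "j \<le> N")
      case True
      then show ?thesis using iT i j S1[of i j] unfolding twin_def by simp
    next
      case False
      then have jj: "j - N \<in> {1..N}" "j - N + N = j" using j by auto
      show ?thesis using iT False i jj S2[of i "j - N"] unfolding twin_def by simp
    qed
  next
    case False
    note iF = False
    then have ii: "i - N \<in> {1..N}" "i - N + N = i" using i by auto
    show ?thesis
    proof (cases "j \<le> N")
      case True
      then show ?thesis using iF ii j S2[of "i - N" j] unfolding twin_def by simp
    next
      case False
      then have jj: "j - N \<in> {1..N}" "j - N + N = j" using j by auto
      show ?thesis using iF False ii jj S1[of "i - N" "j - N"] unfolding twin_def by simp
    qed
  qed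
qed

lemma sum_twin:
  "(\<Sum>a\<in>(\<Pi>\<^sub>E j\<in>{..k}. twin N -` X j \<inter> {1..2*N}). p (a 0) * (\<Prod>j<k. P (a j) (a (Suc j))))
   = (\<Sum>a\<in>(\<Pi>\<^sub>E j\<in>{..k}. X j \<inter> {1..2*N}). p (a 0) * (\<Prod>j<k. P (a j) (a (Suc j))))"
proof (rule sum.reindex_bij_witness[where i="\<lambda>a. \<lambda>j\<in>{..k}. twin N (a j)" and j="\<lambda>a. \<lambda>j\<in>{..k}. twin N (a j)"])
  fix a assume a: "a \<in> (\<Pi>\<^sub>E j\<in>{..k}. twin N -` X j \<inter> {1..2*N})"
  show "(\<lambda>j\<in>{..k}. twin N ((\<lambda>j\<in>{..k}. twin N (a j)) j)) = a"
  proof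
    fix j show "(\<lambda>j\<in>{..k}. twin N ((\<lambda>j\<in>{..k}. twin N (a j)) j)) j = a j"
      using a twin_twin'[of "a j" N] by (cases "j \<le> k") (auto simp: PiE_iff extensional_def)
  qed
  show "(\<lambda>j\<in>{..k}. twin N (a j)) \<in> (\<Pi>\<^sub>E j\<in>{..k}. X j \<inter> {1..2*N})"
    using a twin_range' by (auto simp: PiE_iff)
  have a0: "a j \<in> {1..2*N}" if "j \<le> k" for j using a that by (auto simp: PiE_iff)
  show "p ((\<lambda>j\<in>{..k}. twin N (a j)) 0) * (\<Prod>j<k. P ((\<lambda>j\<in>{..k}. twin N (a j)) j) ((\<lambda>j\<in>{..k}. twin N (a j)) (Suc j)))
      = p (a 0) * (\<Prod>j<k. P (a j) (a (Suc j)))"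
  proof -
    have "p (twin N (a 0)) = p (a 0)" using p_twin[OF mm sym a0[of 0]] by simp
    moreover have "(\<Prod>j<k. P ((\<lambda>j\<in>{..k}. twin N (a j)) j) ((\<lambda>j\<in>{..k}. twin N (a j)) (Suc j)))
        = (\<Prod>j<k. P (a j) (a (Suc j)))"
    proof (rule prod.cong[OF refl])
      fix j assume "j \<in> {..<k}"
      then have "j \<le> k" "Suc j \<le> k" by auto
      then show "P ((\<lambda>j\<in>{..k}. twin N (a j)) j) ((\<lambda>j\<in>{..k}. twin N (a j)) (Suc j)) = P (a j) (a (Suc j))"
        using P_twin[OF a0 a0] by simp
    qed
    ultimately show ?thesis by simp
  qed
next
  fix b assume b: "b \<in> (\<Pi>\<^sub>E j\<in>{..k}. X j \<inter> {1..2*N})"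
  show "(\<lambda>j\<in>{..k}. twin N ((\<lambda>j\<in>{..k}. twin N (b j)) j)) = b"
  proof
    fix j show "(\<lambda>j\<in>{..k}. twin N ((\<lambda>j\<in>{..k}. twin N (b j)) j)) j = b j"
      using b twin_twin'[of "b j" N] by (cases "j \<le> k") (auto simp: PiE_iff extensional_def)
  qed
  show "(\<lambda>j\<in>{..k}. twin N (b j)) \<in> (\<Pi>\<^sub>E j\<in>{..k}. twin N -` X j \<inter> {1..2*N})"
    using b twin_range' twin_twin' by (auto simp: PiE_iff)
qed

lemma Mkey:
  assumes J: "finite J"
  shows "measure lam {\<omega>. \<forall>j\<in>J. \<omega> j \<in> A j} = measure lam {\<omega>. \<forall>j\<in>J. twin N (\<omega> j) \<in> A j}"
proof -
  obtain m k where mk: "\<forall>x\<in>J. \<exists>j\<le>k. x = m + int j" using interval_cover[OF J] by blast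
  define X where "X j = (if m + int j \<in> J then A (m + int j) else UNIV)" for j
  have e1: "{\<omega>. \<forall>j\<in>J. \<omega> j \<in> A j} = {\<omega>. \<forall>j\<le>k. \<omega> (m + int j) \<in> X j}"
  proof (intro set_eqI iffI CollectI allI impI ballI)
    fix \<omega> j assume "\<omega> \<in> {\<omega>. \<forall>j\<in>J. \<omega> j \<in> A j}" "j \<le> k"
    then show "\<omega> (m + int j) \<in> X j" unfolding X_def by auto
  next
    fix \<omega> x assume a: "\<omega> \<in> {\<omega>. \<forall>j\<le>k. \<omega> (m + int j) \<in> X j}" and x: "x \<in> J"
    then obtain j where j: "j \<le> k" "x = m + int j" using mk by blast
    then show "\<omega> x \<in> A x" using a x unfolding X_def by auto
  qed
  have e2: "{\<omega>. \<forall>j\<in>J. twin N (\<omega> j) \<in> A j} = {\<omega>. \<forall>j\<le>k. \<omega> (m + int j) \<in> twin N -` X j}"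
  proof (intro set_eqI iffI CollectI allI impI ballI)
    fix \<omega> j assume "\<omega> \<in> {\<omega>. \<forall>j\<in>J. twin N (\<omega> j) \<in> A j}" "j \<le> k"
    then show "\<omega> (m + int j) \<in> twin N -` X j" unfolding X_def by auto
  next
    fix \<omega> x assume a: "\<omega> \<in> {\<omega>. \<forall>j\<le>k. \<omega> (m + int j) \<in> twin N -` X j}" and x: "x \<in> J"
    then obtain j where j: "j \<le> k" "x = m + int j" using mk by blast
    then show "twin N (\<omega> x) \<in> A x" using a x unfolding X_def by auto
  qed
  show ?thesis unfolding e1 e2 F_formula[OF mm sym] sum_twin ..
qed

lemma meas_lam:
  fixes g :: "(int \<Rightarrow> nat) \<Rightarrow> 'b::topological_space"
  assumes "g \<in> borel_measurable borel"
  shows "g \<in> measurable lam borel"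
proof -
  have "measurable lam borel = measurable borel (borel :: 'b measure)"
    by (rule measurable_cong_sets[OF sets_lam[OF mm sym] refl])
  then show ?thesis using assms by simp
qed

lemma distr_sig: "distr lam borel (sig N) = lam"
proof -
  have sm: "sig N \<in> measurable lam borel" by (rule meas_lam[OF sig_meas])
  show ?thesis
  proof (rule measure_eqI_PiM_infinite[where I=UNIV and M="\<lambda>_. borel"])
    show "sets (distr lam borel (sig N)) = sets (Pi\<^sub>M UNIV (\<lambda>_. borel))"
      by (simp add: sets_PiM_equal_borel)
    show "sets lam = sets (Pi\<^sub>M UNIV (\<lambda>_. borel))"
      using sets_lam[OF mm sym] by (simp add: sets_PiM_equal_borel)
    show "finite_measure (distr lam borel (sig N))"
      using prob_space.prob_space_distr[OF ps[OF mm sym] sm] by (rule prob_space.finite_measure)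
    fix A :: "int \<Rightarrow> nat set" and J :: "int set"
    assume J: "finite J" "J \<subseteq> UNIV" and A: "\<And>i. i \<in> J \<Longrightarrow> A i \<in> sets borel"
    have E: "prod_emb UNIV (\<lambda>_. borel) J (Pi\<^sub>E J A) = {\<omega>. \<forall>j\<in>J. \<omega> j \<in> A j}"
      by (auto simp: prod_emb_def restrict_PiE_iff)
    have Es: "{\<omega>::int \<Rightarrow> nat. \<forall>j\<in>J. \<omega> j \<in> A j} \<in> sets borel"
      by (rule fin_dep_sets[OF J(1)]) auto
    have V: "sig N -` {\<omega>. \<forall>j\<in>J. \<omega> j \<in> A j} \<inter> space lam = {\<omega>. \<forall>j\<in>J. twin N (\<omega> j) \<in> A j}"
      using space_lam[OF mm sym] by (auto simp: sig_def)
    show "emeasure (distr lam borel (sig N)) (prod_emb UNIV (\<lambda>_. borel) J (Pi\<^sub>E J A))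
        = emeasure lam (prod_emb UNIV (\<lambda>_. borel) J (Pi\<^sub>E J A))"
      unfolding E emeasure_distr[OF sm Es] V
      using Mkey[OF J(1), of A] emeas_eq[OF mm sym] by simp
  qed
qed

lemma sig_null:
  assumes E: "E \<in> null_sets lam"
  shows "sig N -` E \<in> null_sets lam"
proof -
  have sm: "sig N \<in> measurable lam borel" by (rule meas_lam[OF sig_meas])
  have Es: "E \<in> sets borel" using E sets_lam[OF mm sym] by auto
  have s: "sig N -` E \<in> sets lam"
    using measurable_sets[OF sm Es] space_lam[OF mm sym] by simp
  have "emeasure lam (sig N -` E) = emeasure (distr lam borel (sig N)) E"
    using emeasure_distr[OF sm Es] space_lam[OF mm sym] by simp
  also have "\<dots> = emeasure lam E" by (simp add: distr_sig)
  also have "\<dots> = 0" using E by auto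
  finally show ?thesis using s by (simp add: null_sets_def)
qed

lemma push_null:
  assumes cover: "\<And>i. i \<in> {1..N} \<Longrightarrow> i \<in> IP N f \<or> i \<in> IR N f"
    and Nn: "Nn \<in> null_sets lam"
  shows "lift N (IR N f) -` Nn \<in> null_sets (distr lam borel (proj N))"
proof -
  have pm: "proj N \<in> measurable lam borel" by (rule meas_lam[OF proj_meas])
  have Nb: "Nn \<in> sets borel" using Nn sets_lam[OF mm sym] by auto
  have Ls: "lift N (IR N f) -` Nn \<in> sets borel"
    using measurable_sets[OF lift_meas Nb] by simp
  obtain Z where Z: "{x \<in> space lam. \<not> x \<in> SigmaA N f} \<subseteq> Z" "emeasure lam Z = 0" "Z \<in> sets lam"
    using AE_SigmaA[OF mm sym] by (rule AE_E)
  have Zn: "Z \<in> null_sets lam" using Z by (simp add: null_sets_def)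
  have G: "Nn \<union> sig N -` Nn \<union> Z \<in> null_sets lam"
    using Nn sig_null[OF Nn] Zn by auto
  have sub: "proj N -` (lift N (IR N f) -` Nn) \<subseteq> Nn \<union> sig N -` Nn \<union> Z"
  proof
    fix \<omega> assume w: "\<omega> \<in> proj N -` (lift N (IR N f) -` Nn)"
    show "\<omega> \<in> Nn \<union> sig N -` Nn \<union> Z"
    proof (cases "\<omega> \<in> SigmaA N f")
      case False then show ?thesis using Z(1) space_lam[OF mm sym] by auto
    next
      case True
      show ?thesis
      proof (cases "\<omega> 0 \<le> N")
        case True2: True
        then show ?thesis using lift_proj(1)[OF cover True] w by auto
      next
        case False2: False
        then show ?thesis using lift_proj(2)[OF cover True] w by auto
      qed
    qed
  qed
  have ps_sets: "proj N -` (lift N (IR N f) -` Nn) \<in> sets lam"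
    using measurable_sets[OF pm Ls] space_lam[OF mm sym] by simp
  have "proj N -` (lift N (IR N f) -` Nn) \<in> null_sets lam"
    by (rule null_sets_subset[OF G ps_sets sub])
  then have "emeasure (distr lam borel (proj N)) (lift N (IR N f) -` Nn) = 0"
    using emeasure_distr[OF pm Ls] space_lam[OF mm sym] by auto
  then show ?thesis using Ls by (simp add: null_sets_def)
qed

end


lemma nbhd_refl: "A \<subseteq> nbhd e C \<Longrightarrow> refl ` A \<subseteq> nbhd e (refl ` C)"
  unfolding nbhd_def refl_def
proof
  fix x assume A: "A \<subseteq> {x. \<exists>y\<in>C. \<bar>x - y\<bar> < e}" and x: "x \<in> (\<lambda>x. 1 - x) ` A"
  then obtain a where a: "a \<in> A" "x = 1 - a" by blast
  then obtain c where c: "c \<in> C" "\<bar>a - c\<bar> < e" using A by blast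
  have "1 - c \<in> (\<lambda>x. 1 - x) ` C" using c by blast
  moreover have "\<bar>x - (1 - c)\<bar> < e" using a c by (simp add: abs_minus_commute)
  ultimately show "x \<in> {x. \<exists>y\<in>(\<lambda>x. 1 - x) ` C. \<bar>x - y\<bar> < e}" by blast
qed

lemma is_interval_refl: "is_interval (A :: real set) \<Longrightarrow> is_interval (refl ` A)"
proof -
  assume "is_interval A"
  then have "connected A" by (simp add: is_interval_connected_1)
  moreover have "continuous_on A refl" unfolding refl_def by (intro continuous_intros)
  ultimately have "connected (refl ` A)" by (rule connected_continuous_image[rotated])
  then show ?thesis by (simp add: is_interval_connected_1)
qed

theorem lemma3p15:
  fixes N :: nat and f :: "nat \<Rightarrow> real \<Rightarrow> real"
    and p :: "nat \<Rightarrow> real" and P :: "nat \<Rightarrow> nat \<Rightarrow> real"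
    and lam :: "(int \<Rightarrow> nat) measure" and B :: "((int \<Rightarrow> nat) \<times> real) set"
  assumes "N \<ge> 1"
    and "\<forall>i\<in>{1..N}. C1_diffeo_onto_image (f i)"
    and "markov_measure (2 * N) (Amat N f) p P lam"
    and "symmetric_markov N p P"
    and "bony_graph (SigmaA N f) lam B"
  shows "bi_bony_graph (SigmaN N) (distr lam borel (proj N)) (PiMap N ` B)
         \<and> (continuous_bony_graph (SigmaA N f) lam B \<longrightarrow>
            continuous_bi_bony_graph (SigmaN N) (distr lam borel (proj N)) (PiMap N ` B))"
proof -
  have cover: "\<And>i. i \<in> {1..N} \<Longrightarrow> i \<in> IP N f \<or> i \<in> IR N f" using IPIR_cover[OF assms(2)] by blast
  note mm = assms(3) and sym = assms(4)
  define l where "l = lift N (IR N f)"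
  define lm where "lm = (\<lambda>\<xi>. sig N (l \<xi>))"
  define S where "S = SigmaA N f"
  define B1 where "B1 = PiMap N ` (B \<inter> {z. fst z \<in> cylC N})"
  define B2 where "B2 = PiMap N ` (B \<inter> {z. fst z \<notin> cylC N})"
  have BU: "PiMap N ` B = B1 \<union> B2" unfolding B1_def B2_def by auto
  have Bsub: "B \<subseteq> S \<times> unitI" and AEB: "AE \<omega> in lam. \<omega> \<in> S \<longrightarrow> (\<exists>x. fiber B \<omega> = {x})"
    and Bfib: "\<And>\<omega>. \<omega> \<in> S \<Longrightarrow> is_interval (fiber B \<omega>) \<and> fiber B \<omega> \<noteq> {}"
    using assms(5) unfolding bony_graph_def S_def by auto
  have lS: "l \<xi> \<in> S" "l \<xi> 0 \<le> N" "proj N (l \<xi>) = \<xi>" if "\<xi> \<in> SigmaN N" for \<xi>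
    using lift_props[OF cover that] unfolding l_def S_def by auto
  have lr: "l \<xi> 0 \<in> {1..2*N}" if "\<xi> \<in> SigmaN N" for \<xi>
    using lS(1)[OF that] unfolding S_def SigmaA_def by auto
  have lmS: "lm \<xi> \<in> S" "\<not> lm \<xi> 0 \<le> N" "proj N (lm \<xi>) = \<xi>" if "\<xi> \<in> SigmaN N" for \<xi>
  proof -
    show "lm \<xi> \<in> S" using sig_SigmaA[OF cover lS(1)[OF that, unfolded S_def]] unfolding lm_def S_def .
    show "\<not> lm \<xi> 0 \<le> N" using lr[OF that] lS(2)[OF that] unfolding lm_def sig_def twin_def by auto
    show "proj N (lm \<xi>) = \<xi>" using proj_sig[OF cover lS(1)[OF that, unfolded S_def]] lS(3)[OF that]
      unfolding lm_def by simp
  qed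
  have fb1: "fiber B1 \<xi> = fiber B (l \<xi>)" if xi: "\<xi> \<in> SigmaN N" for \<xi>
  proof (intro set_eqI iffI)
    fix x assume "x \<in> fiber B1 \<xi>"
    then obtain \<omega> y where wy: "(\<omega>, y) \<in> B" "\<omega> 0 \<le> N" "PiMap N (\<omega>, y) = (\<xi>, x)"
      unfolding fiber_def B1_def cylC_def by auto
    then have e: "proj N \<omega> = \<xi>" "y = x" unfolding PiMap_def cylC_def by auto
    have wS: "\<omega> \<in> SigmaA N f" using wy(1) Bsub unfolding S_def by auto
    have "l \<xi> = \<omega>" using lift_proj(1)[OF cover wS wy(2)] e unfolding l_def by auto
    then show "x \<in> fiber B (l \<xi>)" using wy(1) e unfolding fiber_def by auto
  next
    fix x assume "x \<in> fiber B (l \<xi>)"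
    then have "(l \<xi>, x) \<in> B" unfolding fiber_def by auto
    moreover have "PiMap N (l \<xi>, x) = (\<xi>, x)" using lS[OF xi] unfolding PiMap_def cylC_def by auto
    ultimately show "x \<in> fiber B1 \<xi>" using lS(2)[OF xi] unfolding fiber_def B1_def cylC_def
      by (auto intro!: image_eqI[of _ _ "(l \<xi>, x)"])
  qed
  have fb2: "fiber B2 \<xi> = refl ` fiber B (lm \<xi>)" if xi: "\<xi> \<in> SigmaN N" for \<xi>
  proof (intro set_eqI iffI)
    fix x assume "x \<in> fiber B2 \<xi>"
    then obtain \<omega> y where wy: "(\<omega>, y) \<in> B" "\<not> \<omega> 0 \<le> N" "PiMap N (\<omega>, y) = (\<xi>, x)"
      unfolding fiber_def B2_def cylC_def by auto
    then have e: "proj N \<omega> = \<xi>" "x = refl y" unfolding PiMap_def cylC_def by auto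
    have wS: "\<omega> \<in> SigmaA N f" using wy(1) Bsub unfolding S_def by auto
    have "l \<xi> = sig N \<omega>" using lift_proj(2)[OF cover wS wy(2)] e unfolding l_def by auto
    then have "lm \<xi> = \<omega>" using sig_sig[OF cover wS] unfolding lm_def by simp
    then show "x \<in> refl ` fiber B (lm \<xi>)" using wy(1) e unfolding fiber_def by auto
  next
    fix x assume "x \<in> refl ` fiber B (lm \<xi>)"
    then obtain y where y: "(lm \<xi>, y) \<in> B" "x = refl y" unfolding fiber_def by auto
    moreover have "PiMap N (lm \<xi>, y) = (\<xi>, refl y)" using lmS[OF xi] unfolding PiMap_def cylC_def by auto
    ultimately show "x \<in> fiber B2 \<xi>" using lmS(2)[OF xi] unfolding fiber_def B2_def cylC_def
      by (auto intro!: image_eqI[of _ _ "(lm \<xi>, y)"])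
  qed
  obtain Nn where Nn: "{x \<in> space lam. \<not> (x \<in> S \<longrightarrow> (\<exists>y. fiber B x = {y}))} \<subseteq> Nn"
    "emeasure lam Nn = 0" "Nn \<in> sets lam"
    using AEB by (rule AE_E)
  have NnN: "Nn \<in> null_sets lam" using Nn by (simp add: null_sets_def)
  have spl: "space lam = UNIV" by (rule space_lam[OF mm sym])
  have sub1: "B1 \<subseteq> SigmaN N \<times> unitI"
  proof
    fix z assume "z \<in> B1"
    then obtain \<omega> y where wy: "(\<omega>, y) \<in> B" "\<omega> 0 \<le> N" "z = (proj N \<omega>, y)"
      unfolding B1_def PiMap_def cylC_def by auto
    then have "\<omega> \<in> SigmaA N f" "y \<in> unitI" using Bsub unfolding S_def by auto
    then show "z \<in> SigmaN N \<times> unitI" using wy proj_SigmaN[OF cover] by auto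
  qed
  have sub2: "B2 \<subseteq> SigmaN N \<times> unitI"
  proof
    fix z assume "z \<in> B2"
    then obtain \<omega> y where wy: "(\<omega>, y) \<in> B" "\<not> \<omega> 0 \<le> N" "z = (proj N \<omega>, refl y)"
      unfolding B2_def PiMap_def cylC_def by auto
    then have "\<omega> \<in> SigmaA N f" "y \<in> unitI" using Bsub unfolding S_def by auto
    moreover then have "refl y \<in> unitI" unfolding unitI_def refl_def by auto
    ultimately show "z \<in> SigmaN N \<times> unitI" using wy proj_SigmaN[OF cover] by auto
  qed
  have bony1: "bony_graph (SigmaN N) (distr lam borel (proj N)) B1"
    unfolding bony_graph_def
  proof (intro conjI ballI)
    show "B1 \<subseteq> SigmaN N \<times> unitI" by (rule sub1)
    show "AE \<xi> in distr lam borel (proj N). \<xi> \<in> SigmaN N \<longrightarrow> (\<exists>x. fiber B1 \<xi> = {x})"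
    proof (rule AE_I'[OF push_null[OF mm sym cover NnN]])
      show "{\<xi> \<in> space (distr lam borel (proj N)). \<not> (\<xi> \<in> SigmaN N \<longrightarrow> (\<exists>x. fiber B1 \<xi> = {x}))}
          \<subseteq> lift N (IR N f) -` Nn"
      proof
        fix \<xi> assume "\<xi> \<in> {\<xi> \<in> space (distr lam borel (proj N)). \<not> (\<xi> \<in> SigmaN N \<longrightarrow> (\<exists>x. fiber B1 \<xi> = {x}))}"
        then have xi: "\<xi> \<in> SigmaN N" and ns: "\<not> (\<exists>x. fiber B (l \<xi>) = {x})" using fb1 by auto
        then have "l \<xi> \<in> Nn" using Nn(1) lS(1)[OF xi] spl by auto
        then show "\<xi> \<in> lift N (IR N f) -` Nn" unfolding l_def by simp
      qed
    qed
    fix \<xi> assume xi: "\<xi> \<in> SigmaN N"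
    show "is_interval (fiber B1 \<xi>)" "fiber B1 \<xi> \<noteq> {}" using fb1[OF xi] Bfib[OF lS(1)[OF xi]] by auto
  qed
  have bony2: "bony_graph (SigmaN N) (distr lam borel (proj N)) B2"
    unfolding bony_graph_def
  proof (intro conjI ballI)
    show "B2 \<subseteq> SigmaN N \<times> unitI" by (rule sub2)
    show "AE \<xi> in distr lam borel (proj N). \<xi> \<in> SigmaN N \<longrightarrow> (\<exists>x. fiber B2 \<xi> = {x})"
    proof (rule AE_I'[OF push_null[OF mm sym cover sig_null[OF mm sym NnN]]])
      show "{\<xi> \<in> space (distr lam borel (proj N)). \<not> (\<xi> \<in> SigmaN N \<longrightarrow> (\<exists>x. fiber B2 \<xi> = {x}))}
          \<subseteq> lift N (IR N f) -` (sig N -` Nn)"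
      proof
        fix \<xi> assume "\<xi> \<in> {\<xi> \<in> space (distr lam borel (proj N)). \<not> (\<xi> \<in> SigmaN N \<longrightarrow> (\<exists>x. fiber B2 \<xi> = {x}))}"
        then have xi: "\<xi> \<in> SigmaN N" and ns: "\<not> (\<exists>x. refl ` fiber B (lm \<xi>) = {x})" using fb2 by auto
        have "\<not> (\<exists>x. fiber B (lm \<xi>) = {x})"
        proof
          assume "\<exists>x. fiber B (lm \<xi>) = {x}"
          then obtain x where "fiber B (lm \<xi>) = {x}" by blast
          then have "refl ` fiber B (lm \<xi>) = {refl x}" by simp
          then show False using ns by blast
        qed
        then have "lm \<xi> \<in> Nn" using Nn(1) lmS(1)[OF xi] spl by auto
        then show "\<xi> \<in> lift N (IR N f) -` (sig N -` Nn)" unfolding lm_def l_def by simp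
      qed
    qed
    fix \<xi> assume xi: "\<xi> \<in> SigmaN N"
    show "is_interval (fiber B2 \<xi>)" using fb2[OF xi] Bfib[OF lmS(1)[OF xi]] is_interval_refl by auto
    show "fiber B2 \<xi> \<noteq> {}" using fb2[OF xi] Bfib[OF lmS(1)[OF xi]] by auto
  qed
  have l_agree: "\<And>k \<xi> \<eta> n. (\<forall>i. \<bar>i\<bar> < int k \<longrightarrow> \<xi> i = \<eta> i) \<Longrightarrow> \<bar>n\<bar> < int k \<Longrightarrow> l \<xi> n = l \<eta> n"
    unfolding l_def by (rule lift_agree)
  have lm_agree: "\<And>k \<xi> \<eta> n. (\<forall>i. \<bar>i\<bar> < int k \<longrightarrow> \<xi> i = \<eta> i) \<Longrightarrow> \<bar>n\<bar> < int k \<Longrightarrow> lm \<xi> n = lm \<eta> n"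
    unfolding lm_def sig_def using l_agree by metis
  have fstB: "\<omega> \<in> fst ` B" if w: "\<omega> \<in> S" for \<omega>
  proof -
    obtain x where "x \<in> fiber B \<omega>" using Bfib[OF w] by blast
    then show ?thesis unfolding fiber_def by force
  qed
  have fst1: "\<xi> \<in> SigmaN N" if "\<xi> \<in> fst ` B1" for \<xi> using that sub1 by auto
  have fst2: "\<xi> \<in> SigmaN N" if "\<xi> \<in> fst ` B2" for \<xi> using that sub2 by auto
  have cont: "continuous_bi_bony_graph (SigmaN N) (distr lam borel (proj N)) (PiMap N ` B)"
    if cB: "continuous_bony_graph (SigmaA N f) lam B"
  proof -
    have gc: "graph_continuous B" using cB unfolding continuous_bony_graph_def by blast
    have gc1: "graph_continuous B1" unfolding graph_continuous_def
    proof (intro ballI allI impI)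
      fix \<xi> and e :: real assume xi: "\<xi> \<in> fst ` B1" and e: "e > 0"
      have xiN: "\<xi> \<in> SigmaN N" by (rule fst1[OF xi])
      obtain d where d: "d > 0" "\<forall>\<eta>\<in>fst ` B. seq_dist \<eta> (l \<xi>) < d \<longrightarrow> fiber B \<eta> \<subseteq> nbhd e (fiber B (l \<xi>))"
        using gc fstB[OF lS(1)[OF xiN]] e unfolding graph_continuous_def by blast
      show "\<exists>d>0. \<forall>\<eta>\<in>fst ` B1. seq_dist \<eta> \<xi> < d \<longrightarrow> fiber B1 \<eta> \<subseteq> nbhd e (fiber B1 \<xi>)"
      proof (intro exI[of _ d] conjI ballI impI)
        fix \<eta> assume eta: "\<eta> \<in> fst ` B1" and dd: "seq_dist \<eta> \<xi> < d"
        have etaN: "\<eta> \<in> SigmaN N" by (rule fst1[OF eta])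
        have "seq_dist (l \<eta>) (l \<xi>) \<le> seq_dist \<eta> \<xi>" by (rule seq_dist_le) (rule l_agree)
        then have "seq_dist (l \<eta>) (l \<xi>) < d" using dd by simp
        then have "fiber B (l \<eta>) \<subseteq> nbhd e (fiber B (l \<xi>))" using d(2) fstB[OF lS(1)[OF etaN]] by blast
        then show "fiber B1 \<eta> \<subseteq> nbhd e (fiber B1 \<xi>)" using fb1[OF etaN] fb1[OF xiN] by simp
      qed (rule d(1))
    qed
    have gc2: "graph_continuous B2" unfolding graph_continuous_def
    proof (intro ballI allI impI)
      fix \<xi> and e :: real assume xi: "\<xi> \<in> fst ` B2" and e: "e > 0"
      have xiN: "\<xi> \<in> SigmaN N" by (rule fst2[OF xi])
      obtain d where d: "d > 0" "\<forall>\<eta>\<in>fst ` B. seq_dist \<eta> (lm \<xi>) < d \<longrightarrow> fiber B \<eta> \<subseteq> nbhd e (fiber B (lm \<xi>))"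
        using gc fstB[OF lmS(1)[OF xiN]] e unfolding graph_continuous_def by blast
      show "\<exists>d>0. \<forall>\<eta>\<in>fst ` B2. seq_dist \<eta> \<xi> < d \<longrightarrow> fiber B2 \<eta> \<subseteq> nbhd e (fiber B2 \<xi>)"
      proof (intro exI[of _ d] conjI ballI impI)
        fix \<eta> assume eta: "\<eta> \<in> fst ` B2" and dd: "seq_dist \<eta> \<xi> < d"
        have etaN: "\<eta> \<in> SigmaN N" by (rule fst2[OF eta])
        have "seq_dist (lm \<eta>) (lm \<xi>) \<le> seq_dist \<eta> \<xi>" by (rule seq_dist_le) (rule lm_agree)
        then have "seq_dist (lm \<eta>) (lm \<xi>) < d" using dd by simp
        then have "fiber B (lm \<eta>) \<subseteq> nbhd e (fiber B (lm \<xi>))" using d(2) fstB[OF lmS(1)[OF etaN]] by blast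
        then show "fiber B2 \<eta> \<subseteq> nbhd e (fiber B2 \<xi>)" using fb2[OF etaN] fb2[OF xiN] nbhd_refl by simp
      qed (rule d(1))
    qed
    show ?thesis unfolding continuous_bi_bony_graph_def continuous_bony_graph_def
      using BU bony1 bony2 gc1 gc2 by blast
  qed
  show ?thesis using BU bony1 bony2 cont unfolding bi_bony_graph_def by blast
qed

end
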